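(* Let $\mathcal L:\mathbb F^{q\times q}\to\mathbb F^{n\times n}$ be $*$-linear with Choi matrix $\mathbb L$ and matricization $L=[L_{ij}]$, and set $m=\operatorname{rank}\mathbb L$. Let $L_1,\ldots,L_m$ and $L_1',\ldots,L_m'$ in $\mathbb F^{n\times q}$ both span $\operatorname{span}\{L_{ij}:1\le i\le n,1\le j\le q\}$. Let $A_1,\ldots,A_m$, $\mathbb H$ be obtained from $L_1,\ldots,L_m$ by the construction below, and $A_1',\ldots,A_m'$, $\mathbb H'$ likewise from $L_1',\ldots,L_m'$. Then there is an invertible $\Phi\in\mathbb F^{m\times m}$ with $$\begin{bmatrix}L_1\\ \vdots\\ L_m\end{bmatrix}=(\Phi\otimes I_n)\begin{bmatrix}L_1'\\ \vdots\\ L_m'\end{bmatrix},\qquad (\Phi^*\otimes I_n)\begin{bmatrix}A_1\\ \vdots\\ A_m\end{bmatrix}=\begin{bmatrix}A_1'\\ \vdots\\ A_m'\end{bmatrix},\qquad \mathbb H=\Phi\mathbb H'\Phi^*.$$ In fact one may take $\Phi=[\vec{\mathbf 1}_n^*(B_k\circ\overline{A_l'})\vec{\mathbf 1}_q]_{k,l=1}^m$.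
   Context: $\mathbb F\in\{\mathbb R,\mathbb C\}$; $\otimes$ is the Kronecker product, $\circ$ the Hadamard product, $\vec{\mathbf 1}_p$ the all-ones vector. For $T\in\mathbb F^{r\times s}$, $\operatorname{vec}_{r\times s}(T)$ is column-stacking vectorization. For linear $\mathcal L:\mathbb F^{q\times q}\to\mathbb F^{n\times n}$: matricization $L\in\mathbb F^{n^2\times q^2}$ with $L\operatorname{vec}(V)=\operatorname{vec}(\mathcal L(V))$, written as $L=[L_{ij}]$, $1\le i\le n$, $1\le j\le q$, blocks $L_{ij}\in\mathbb F^{n\times q}$; Choi matrix $\mathbb L=[\mathcal L(\mathcal E^{(q)}_{ij})]_{i,j=1}^q$ where $\mathcal E^{(q)}_{ij}$ are standard basis matrices. $*$-linear means $\mathcal L(V^* )=\mathcal L(V)^*$. Construction: given $L_1,\ldots,L_m$ spanning $\operatorname{span}\{L_{ij}\}$ ($m=\operatorname{rank}\mathbb L$), let $L_{ij}=\sum_k\alpha^{ij}_kL_k$ (unique scalars) and $L_k=\sum_{i,j}\beta^k_{ij}L_{ij}$ (any choice); $A_k$ has $(i,j)$ entry $\overline{\alpha^{ij}_k}$, $B_k$ has $(i,j)$ entry $\beta^k_{ij}$, and $\mathbb H=[\vec{\mathbf 1}_n^*(B_k\circ\overline{L_l})\vec{\mathbf 1}_q]_{k,l=1}^m$. Analogously $\alpha'^{ij}_k,\beta'^k_{ij},A_k',B_k',\mathbb H'$ for $L_1',\ldots,L_m'$. *)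

theory Defs
  imports "Jordan_Normal_Form.Schur_Decomposition" "Jordan_Normal_Form.DL_Rank"
begin

(* Scalars: a field with an involutive conjugation (class conjugatable_field);
   instances include real (conjugate = id) and complex (conjugate = cnj).
   All indices are 0-based. *)

definition std_basis :: "nat \<Rightarrow> nat \<Rightarrow> nat \<Rightarrow> 'a::zero_neq_one mat" where
  "std_basis q i j = mat q q (\<lambda>(r,s). if r = i \<and> s = j then 1 else 0)"

definition vec_col :: "'a mat \<Rightarrow> 'a vec" where
  "vec_col A = vec (dim_row A * dim_col A) (\<lambda>k. A $$ (k mod dim_row A, k div dim_row A))"

definition choi_matrix :: "('a::zero_neq_one mat \<Rightarrow> 'a mat) \<Rightarrow> nat \<Rightarrow> nat \<Rightarrow> 'a mat" where
  "choi_matrix Lm n q = mat (q*n) (q*n)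
     (\<lambda>(r,c). Lm (std_basis q (r div n) (c div n)) $$ (r mod n, c mod n))"

definition blk :: "'a mat \<Rightarrow> nat \<Rightarrow> nat \<Rightarrow> nat \<Rightarrow> nat \<Rightarrow> 'a mat" where
  "blk M n q i j = mat n q (\<lambda>(a,b). M $$ (i*n + a, j*q + b))"

definition lin_comb :: "nat \<Rightarrow> nat \<Rightarrow> 'i set \<Rightarrow> ('i \<Rightarrow> 'a::comm_ring_1) \<Rightarrow> ('i \<Rightarrow> 'a mat) \<Rightarrow> 'a mat" where
  "lin_comb n q K c F = mat n q (\<lambda>(a,b). \<Sum>k\<in>K. c k * F k $$ (a,b))"

definition mspan :: "nat \<Rightarrow> nat \<Rightarrow> 'i set \<Rightarrow> ('i \<Rightarrow> 'a::comm_ring_1 mat) \<Rightarrow> 'a mat set" where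
  "mspan n q K F = {lin_comb n q K c F | c. True}"

definition kron :: "'a::times mat \<Rightarrow> 'a mat \<Rightarrow> 'a mat" where
  "kron A B = mat (dim_row A * dim_row B) (dim_col A * dim_col B)
     (\<lambda>(r,c). A $$ (r div dim_row B, c div dim_col B) * B $$ (r mod dim_row B, c mod dim_col B))"

definition vstack :: "nat \<Rightarrow> nat \<Rightarrow> nat \<Rightarrow> (nat \<Rightarrow> 'a mat) \<Rightarrow> 'a mat" where
  "vstack n q m F = mat (m*n) q (\<lambda>(r,c). F (r div n) $$ (r mod n, c))"

definition hadamard :: "'a::times mat \<Rightarrow> 'a mat \<Rightarrow> 'a mat" where
  "hadamard A B = mat (dim_row A) (dim_col A) (\<lambda>(i,j). A $$ (i,j) * B $$ (i,j))"

definition ones_vec :: "nat \<Rightarrow> 'a::one vec" where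
  "ones_vec p = vec p (\<lambda>_. 1)"

definition mat_conj :: "'a::conjugate mat \<Rightarrow> 'a mat" where
  "mat_conj A = mat (dim_row A) (dim_col A) (\<lambda>ij. conjugate (A $$ ij))"

definition ones_form :: "'a::conjugatable_field mat \<Rightarrow> 'a mat \<Rightarrow> 'a" where
  "ones_form B X = conjugate (ones_vec (dim_row B)) \<bullet> (hadamard B (mat_conj X) *\<^sub>v ones_vec (dim_col B))"

definition coefA :: "nat \<Rightarrow> nat \<Rightarrow> (nat \<Rightarrow> nat \<Rightarrow> nat \<Rightarrow> 'a::conjugatable_field) \<Rightarrow> nat \<Rightarrow> 'a mat" where
  "coefA n q alpha k = mat n q (\<lambda>(i,j). conjugate (alpha i j k))"

definition coefB :: "nat \<Rightarrow> nat \<Rightarrow> (nat \<Rightarrow> nat \<Rightarrow> nat \<Rightarrow> 'a) \<Rightarrow> nat \<Rightarrow> 'a mat" where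
  "coefB n q beta k = mat n q (\<lambda>(i,j). beta k i j)"

definition constrH :: "nat \<Rightarrow> (nat \<Rightarrow> 'a::conjugatable_field mat) \<Rightarrow> (nat \<Rightarrow> 'a mat) \<Rightarrow> 'a mat" where
  "constrH m B Lk = mat m m (\<lambda>(k,l). ones_form (B k) (Lk l))"

end

theory Submission
  imports Defs
begin

lemma adj_dims[simp]: "dim_row (mat_adjoint A) = dim_col A" "dim_col (mat_adjoint A) = dim_row A"
  unfolding mat_adjoint_def by auto

lemma adj_index[simp]: "i < dim_col A \<Longrightarrow> j < dim_row A \<Longrightarrow> mat_adjoint A $$ (i,j) = conjugate (A $$ (j,i))"
  unfolding mat_adjoint_def by (simp add: mat_of_rows_index conjugate_vec_def)

lemma conj_one[simp]: "conjugate (1::'a::conjugatable_field) = 1"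
proof -
  have "conjugate (1::'a) = conjugate 1 * conjugate 1"
    using conjugate_dist_mul[of "1::'a" 1] by simp
  moreover have "conjugate (1::'a) \<noteq> 0" by simp
  ultimately show ?thesis by (metis mult_cancel_right1)
qed

lemma adj_std_basis: "i < q \<Longrightarrow> j < q \<Longrightarrow> mat_adjoint (std_basis q i j :: 'a::conjugatable_field mat) = std_basis q j i"
  by (rule eq_matI) (auto simp: std_basis_def)

lemma vec_col_std: assumes "c < q" "d < q"
  shows "vec_col (std_basis q c d :: 'a::zero_neq_one mat) = unit_vec (q*q) (c + q*d)"
proof (rule eq_vecI)
  fix k assume k: "k < dim_vec (unit_vec (q*q) (c + q*d) :: 'a vec)"
  hence kq: "k < q*q" by simp
  have "(k mod q = c \<and> k div q = d) = (k = c + q*d)"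
    using assms mod_mult_div_eq[of k q] by auto
  thus "vec_col (std_basis q c d) $ k = unit_vec (q*q) (c + q*d) $ k"
    using kq assms unfolding vec_col_def std_basis_def unit_vec_def by (auto simp: less_mult_imp_div_less)
qed (auto simp: vec_col_def std_basis_def)

lemma LL_entry:
  fixes LL :: "'a::field mat"
  assumes LL_dim: "LL \<in> carrier_mat (n*n) (q*q)"
    and maps_to: "\<And>V. V \<in> carrier_mat q q \<Longrightarrow> Lm V \<in> carrier_mat n n"
    and mz: "\<And>V. V \<in> carrier_mat q q \<Longrightarrow> LL *\<^sub>v vec_col V = vec_col (Lm V)"
    and a: "a < n" and b: "b < n" and c: "c < q" and d: "d < q"
  shows "LL $$ (a + n*b, c + q*d) = Lm (std_basis q c d) $$ (a,b)"
proof -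
  have E: "std_basis q c d \<in> carrier_mat q q" by (simp add: std_basis_def)
  have r: "a + n*b < n*n"
  proof -
    have "a + n*b < n*Suc b" using a by simp
    also have "\<dots> \<le> n*n" using b by (intro mult_le_mono2) simp
    finally show ?thesis .
  qed
  have ci: "c + q*d < q*q"
  proof -
    have "c + q*d < q*Suc d" using c by simp
    also have "\<dots> \<le> q*q" using d by (intro mult_le_mono2) simp
    finally show ?thesis .
  qed
  have "(LL *\<^sub>v vec_col (std_basis q c d)) $ (a + n*b) = LL $$ (a + n*b, c + q*d)"
    unfolding vec_col_std[OF c d] using r ci LL_dim by (simp add: row_def)
  moreover have "vec_col (Lm (std_basis q c d)) $ (a + n*b) = Lm (std_basis q c d) $$ (a,b)"
    using maps_to[OF E] r a unfolding vec_col_def by simp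
  ultimately show ?thesis using mz[OF E] by simp
qed

lemma ones_form_eq:
  fixes B X :: "'a::conjugatable_field mat"
  assumes "B \<in> carrier_mat n q" "X \<in> carrier_mat n q"
  shows "ones_form B X = (\<Sum>(i,j)\<in>{..<n}\<times>{..<q}. B $$ (i,j) * conjugate (X $$ (i,j)))"
  using assms unfolding ones_form_def
  by (simp add: scalar_prod_def ones_vec_def conjugate_vec_def hadamard_def mat_conj_def
      sum.cartesian_product lessThan_atLeast0 case_prod_beta)


context vec_space begin

lemma span_sum_mem:
  assumes K: "finite K" and G: "G ` K \<subseteq> carrier_vec n" and w: "w \<in> carrier_vec n"
    and wr: "\<And>r. r < n \<Longrightarrow> w $ r = (\<Sum>k\<in>K. c k * G k $ r)"
  shows "w \<in> span (G ` K)"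
proof -
  define a where "a x = (\<Sum>k\<in>{k\<in>K. G k = x}. c k)" for x
  have "lincomb a (G ` K) = w"
  proof (rule eq_vecI)
    fix r assume r: "r < dim_vec w"
    hence rn: "r < n" using w by auto
    have "lincomb a (G ` K) $ r = (\<Sum>x\<in>G ` K. a x * x $ r)"
      using lincomb_index[OF rn G] .
    also have "\<dots> = (\<Sum>x\<in>G ` K. (\<Sum>k\<in>{k\<in>K. G k = x}. c k * G k $ r))"
      unfolding a_def sum_distrib_right by (rule sum.cong) auto
    also have "\<dots> = (\<Sum>k\<in>K. c k * G k $ r)"
      using sum.image_gen[OF K, of "\<lambda>k. c k * G k $ r" G] by simp
    finally show "lincomb a (G ` K) $ r = w $ r" using wr[OF rn] by simp
  next
    show "dim_vec (lincomb a (G ` K)) = dim_vec w" using lincomb_dim[OF _ G] K w by auto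
  qed
  thus ?thesis unfolding span_def using K by force
qed

lemma dim_span_le_card:
  assumes "S \<subseteq> carrier_vec n" "finite S"
  shows "vectorspace.dim class_ring (span_vs S) \<le> card S"
proof -
  obtain U where U: "maximal U (\<lambda>T. T \<subseteq> S \<and> lin_indpt T)"
    using maximal_exists[of "(\<lambda>T. T \<subseteq> S \<and> lin_indpt T)" "card S" "{}"] assms
    by (meson card_mono empty_iff empty_subsetI finite_lin_indpt2 rev_finite_subset)
  have "card U \<le> card S" using U assms by (simp add: card_mono maximal_def)
  thus ?thesis using dim_span[OF assms U] by simp
qed

lemma indep_from_rank:
  assumes K: "finite K" and G: "G ` K \<subseteq> carrier_vec n"
    and A: "A \<in> carrier_mat n nc"
    and sp: "span (G ` K) = span (set (cols A))"
    and rk: "rank A = card K"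
    and c: "\<And>r. r < n \<Longrightarrow> (\<Sum>k\<in>K. c k * G k $ r) = 0"
    and k: "k \<in> K"
  shows "c k = 0"
proof -
  have d: "vectorspace.dim class_ring (span_vs (G ` K)) = card K"
    using rk sp unfolding rank_def by simp
  have le: "card K \<le> card (G ` K)" using dim_span_le_card[OF G] K d by simp
  have inj: "inj_on G K" using le K card_image_le[OF K, of G] eq_card_imp_inj_on[OF K] by (metis le_antisym)
  have d2: "vectorspace.dim class_ring (span_vs (G ` K)) = card (G ` K)"
    using d card_image[OF inj] by simp
  have li: "lin_indpt (G ` K)" using full_dim_span[OF _ _ d2] G K by auto
  define a where "a x = c (inv_into K G x)" for x
  have lc: "lincomb a (G ` K) = 0\<^sub>v n"
  proof (rule eq_vecI)
    fix r assume "r < dim_vec (0\<^sub>v n :: 'a vec)"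
    hence rn: "r < n" by simp
    have "lincomb a (G ` K) $ r = (\<Sum>x\<in>G ` K. a x * x $ r)"
      using lincomb_index[OF rn G] .
    also have "\<dots> = (\<Sum>k\<in>K. c k * G k $ r)"
      by (subst sum.reindex[OF inj]) (simp add: a_def inv_into_f_f[OF inj])
    finally show "lincomb a (G ` K) $ r = 0\<^sub>v n $ r" using c[OF rn] rn by simp
  next
    show "dim_vec (lincomb a (G ` K)) = dim_vec (0\<^sub>v n :: 'a vec)" using lincomb_dim[OF _ G] K by auto
  qed
  show ?thesis
  proof (rule ccontr)
    assume "c k \<noteq> 0"
    hence "a (G k) \<noteq> 0" by (simp add: a_def inv_into_f_f[OF inj k])
    hence "lin_dep (G ` K)" unfolding lin_dep_def using K lc k
      by (intro exI[of _ "G ` K"] exI[of _ a] exI[of _ "G k"]) auto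
    thus False using li by simp
  qed
qed
end

lemma sum_blocks: "(\<Sum>s<(m::nat)*n. f s) = (\<Sum>l<m. \<Sum>b<n. f (l*n+b))"
proof (induction m)
  case 0 then show ?case by simp
next
  case (Suc m)
  have "(\<Sum>s<Suc m*n. f s) = (\<Sum>s\<in>{0..<m*n}. f s) + (\<Sum>s\<in>{m*n..<m*n+n}. f s)"
    by (subst sum.atLeastLessThan_concat) (auto simp: lessThan_atLeast0 add.commute)
  also have "(\<Sum>s\<in>{m*n..<m*n+n}. f s) = (\<Sum>b<n. f (m*n+b))"
    using sum.shift_bounds_nat_ivl[of f 0 "m*n" n] by (simp add: lessThan_atLeast0 add.commute)
  finally show ?case using Suc by (simp add: lessThan_atLeast0)
qed

lemma idx_lt: "l < (m'::nat) \<Longrightarrow> b < n \<Longrightarrow> l*n+b < m'*n"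
proof -
  assume "l < m'" "b < n"
  have "l*n + b < Suc l * n" using \<open>b < n\<close> by simp
  also have "\<dots> \<le> m' * n" using \<open>l < m'\<close> by (intro mult_le_mono1) simp
  finally show ?thesis .
qed

lemma kron_I_mult:
  fixes A :: "'a::field mat"
  assumes A: "A \<in> carrier_mat m m'" and F: "\<And>l. l < m' \<Longrightarrow> F l \<in> carrier_mat n q"
    and r: "r < m*n" and c: "c < q"
  shows "(kron A (1\<^sub>m n) * vstack n q m' F) $$ (r,c) = (\<Sum>l<m'. A $$ (r div n, l) * F l $$ (r mod n, c))"
proof -
  have n: "n > 0" using r by (cases n) auto
  have rd: "r div n < m" using r by (simp add: less_mult_imp_div_less)
  have rm: "r mod n < n" using n by simp
  have "(kron A (1\<^sub>m n) * vstack n q m' F) $$ (r,c)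
      = (\<Sum>s<m'*n. kron A (1\<^sub>m n) $$ (r,s) * vstack n q m' F $$ (s,c))"
    using A r c by (simp add: scalar_prod_def kron_def vstack_def atLeast0LessThan)
  also have "\<dots> = (\<Sum>l<m'. \<Sum>b<n. kron A (1\<^sub>m n) $$ (r,l*n+b) * vstack n q m' F $$ (l*n+b,c))"
    by (rule sum_blocks)
  also have "\<dots> = (\<Sum>l<m'. \<Sum>b<n. (if b = r mod n then A $$ (r div n, l) * F l $$ (b, c) else 0))"
  proof (intro sum.cong refl)
    fix l b assume l: "l \<in> {..<m'}" and b: "b \<in> {..<n}"
    have lb: "l*n+b < m'*n" using l b idx_lt by auto
    have d: "(l*n+b) div n = l" "(l*n+b) mod n = b" using b by auto
    show "kron A (1\<^sub>m n) $$ (r,l*n+b) * vstack n q m' F $$ (l*n+b,c)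
        = (if b = r mod n then A $$ (r div n, l) * F l $$ (b, c) else 0)"
      using A r lb c d rm unfolding kron_def vstack_def by auto
  qed
  also have "\<dots> = (\<Sum>l<m'. A $$ (r div n, l) * F l $$ (r mod n, c))"
    using rm by simp
  finally show ?thesis .
qed

lemma combine:
  fixes b :: "'i \<Rightarrow> 'a::comm_ring_1"
  assumes "finite I" "finite L"
  shows "(\<Sum>x\<in>I. b x * (\<Sum>l\<in>L. al x l * y l)) = (\<Sum>l\<in>L. (\<Sum>x\<in>I. b x * al x l) * y l)"
proof -
  have "(\<Sum>x\<in>I. b x * (\<Sum>l\<in>L. al x l * y l)) = (\<Sum>x\<in>I. \<Sum>l\<in>L. b x * al x l * y l)"
    by (simp add: sum_distrib_left mult.assoc)
  also have "\<dots> = (\<Sum>l\<in>L. \<Sum>x\<in>I. b x * al x l * y l)" by (rule sum.swap)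
  also have "\<dots> = (\<Sum>l\<in>L. (\<Sum>x\<in>I. b x * al x l) * y l)" by (simp add: sum_distrib_right)
  finally show ?thesis .
qed

lemma prod_id:
  fixes X Y :: "nat \<Rightarrow> 'a::field mat"
  assumes XY: "\<And>k a c. k < m \<Longrightarrow> a < n \<Longrightarrow> c < q \<Longrightarrow> X k $$ (a,c) = (\<Sum>l<m. ph k l * Y l $$ (a,c))"
    and YX: "\<And>l a c. l < m \<Longrightarrow> a < n \<Longrightarrow> c < q \<Longrightarrow> Y l $$ (a,c) = (\<Sum>k<m. ps l k * X k $$ (a,c))"
    and IND: "\<And>d k. (\<And>a c. a < n \<Longrightarrow> c < q \<Longrightarrow> (\<Sum>k<m. d k * X k $$ (a,c)) = 0) \<Longrightarrow> k < m \<Longrightarrow> d k = 0"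
  shows "mat m m (\<lambda>(k,l). ph k l) * mat m m (\<lambda>(k,l). ps k l) = 1\<^sub>m m"
proof (rule eq_matI)
  fix k k' assume k: "k < dim_row (1\<^sub>m m :: 'a mat)" and k': "k' < dim_col (1\<^sub>m m :: 'a mat)"
  hence k: "k < m" and k': "k' < m" by auto
  define d where "d j = (\<Sum>l<m. ph k l * ps l j) - (if j = k then 1 else 0)" for j
  have "d k' = 0"
  proof (rule IND[OF _ k'])
    fix a c assume a: "a < n" and c: "c < q"
    have e: "\<And>j. (if j = k then 1 else 0) * X j $$ (a,c) = (if j = k then X k $$ (a,c) else 0)" by simp
    have "(\<Sum>j<m. d j * X j $$ (a,c)) = (\<Sum>j<m. (\<Sum>l<m. ph k l * ps l j) * X j $$ (a,c))
        - (\<Sum>j<m. (if j = k then 1 else 0) * X j $$ (a,c))"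
      unfolding d_def by (simp add: left_diff_distrib sum_subtractf)
    also have "(\<Sum>j<m. (if j = k then 1 else 0) * X j $$ (a,c)) = X k $$ (a,c)"
      unfolding e using k by simp
    also have "(\<Sum>j<m. (\<Sum>l<m. ph k l * ps l j) * X j $$ (a,c)) = (\<Sum>l<m. ph k l * (\<Sum>j<m. ps l j * X j $$ (a,c)))"
      by (rule combine[symmetric]) auto
    also have "\<dots> = (\<Sum>l<m. ph k l * Y l $$ (a,c))"
      using YX a c by simp
    also have "\<dots> = X k $$ (a,c)" using XY k a c by simp
    finally show "(\<Sum>j<m. d j * X j $$ (a,c)) = 0" by simp
  qed
  thus "(mat m m (\<lambda>(k,l). ph k l) * mat m m (\<lambda>(k,l). ps k l)) $$ (k,k') = 1\<^sub>m m $$ (k,k')"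
    using k k' unfolding d_def by (simp add: scalar_prod_def atLeast0LessThan)
qed auto



lemma indep_blocks:
  fixes Lm :: "'a::conjugatable_field mat \<Rightarrow> 'a mat" and LL :: "'a mat" and Lk :: "nat \<Rightarrow> 'a mat"
  assumes maps_to: "\<And>V. V \<in> carrier_mat q q \<Longrightarrow> Lm V \<in> carrier_mat n n"
    and LL_dim: "LL \<in> carrier_mat (n*n) (q*q)"
    and LL_matricization: "\<And>V. V \<in> carrier_mat q q \<Longrightarrow> LL *\<^sub>v vec_col V = vec_col (Lm V)"
    and m_rank: "m = vec_space.rank (q*n) (choi_matrix Lm n q)"
    and Lk_dim: "\<And>k. k < m \<Longrightarrow> Lk k \<in> carrier_mat n q"
    and alpha: "\<And>i j. i < n \<Longrightarrow> j < q \<Longrightarrow> blk LL n q i j = lin_comb n q {..<m} (alpha i j) Lk"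
    and beta: "\<And>k. k < m \<Longrightarrow> Lk k = lin_comb n q ({..<n} \<times> {..<q}) (\<lambda>(i,j). beta k i j) (\<lambda>(i,j). blk LL n q i j)"
    and d: "\<And>a c. a < n \<Longrightarrow> c < q \<Longrightarrow> (\<Sum>k<m. d k * Lk k $$ (a,c)) = 0"
    and k: "k < m"
  shows "d k = 0"
proof -
  interpret V: vec_space "TYPE('a)" "q*n" .
  define vm where "vm X = vec (q*n) (\<lambda>r. X $$ (r mod n, r div n))" for X :: "'a mat"
  define C where "C = choi_matrix Lm n q"
  define G where "G k = vm (Lk k)" for k
  define PP where "PP x = vm (blk LL n q (fst x) (snd x))" for x
  let ?I = "{..<n} \<times> {..<q}"
  have Ccar: "C \<in> carrier_mat (q*n) (q*n)" by (simp add: C_def choi_matrix_def)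
  have vm_car: "\<And>X. vm X \<in> carrier_vec (q*n)" by (simp add: vm_def)
  have rdiv: "\<And>r. r < q*n \<Longrightarrow> r mod n < n \<and> r div n < q"
  proof -
    fix r assume r: "r < q*n"
    hence "n > 0" by (cases n) auto
    thus "r mod n < n \<and> r div n < q" using r by (simp add: less_mult_imp_div_less)
  qed
  have lc: "\<And>K c F a b. a < n \<Longrightarrow> b < q \<Longrightarrow> lin_comb n q K c F $$ (a,b) = (\<Sum>k\<in>K. c k * F k $$ (a,b))"
    by (simp add: lin_comb_def)
  have colC: "col C t = vm (blk LL n q (t mod n) (t div n))" if t: "t < q*n" for t
  proof (rule eq_vecI)
    show "dim_vec (col C t) = dim_vec (vm (blk LL n q (t mod n) (t div n)))"
      using Ccar by (simp add: vm_def)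
  next
    fix r assume "r < dim_vec (vm (blk LL n q (t mod n) (t div n)))"
    hence r: "r < q*n" by (simp add: vm_def)
    have "col C t $ r = Lm (std_basis q (r div n) (t div n)) $$ (r mod n, t mod n)"
      using r t Ccar by (simp add: C_def choi_matrix_def)
    also have "\<dots> = LL $$ (r mod n + n * (t mod n), r div n + q * (t div n))"
      using LL_entry[OF LL_dim maps_to LL_matricization, of "r mod n" "t mod n" "r div n" "t div n"]
        rdiv[OF r] rdiv[OF t] by simp
    also have "\<dots> = vm (blk LL n q (t mod n) (t div n)) $ r"
      using r rdiv[OF r] by (simp add: vm_def blk_def ac_simps)
    finally show "col C t $ r = vm (blk LL n q (t mod n) (t div n)) $ r" .
  qed
  have cols_eq: "set (cols C) = (\<lambda>t. col C t) ` {..<q*n}"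
    using Ccar by (simp add: cols_def atLeast0LessThan)
  have PPsub: "PP ` ?I \<subseteq> set (cols C)"
  proof
    fix y assume "y \<in> PP ` ?I"
    then obtain i j where ij: "i < n" "j < q" "y = PP (i,j)" by auto
    have t: "j*n + i < q*n" using idx_lt ij by auto
    have "(j*n+i) mod n = i" "(j*n+i) div n = j" using ij by auto
    hence "y = col C (j*n+i)" using colC[OF t] ij by (simp add: PP_def)
    thus "y \<in> set (cols C)" using cols_eq t by auto
  qed
  have PPcar: "PP ` ?I \<subseteq> carrier_vec (q*n)" using vm_car by (auto simp: PP_def)
  have Gcar: "G ` {..<m} \<subseteq> carrier_vec (q*n)" using vm_car by (auto simp: G_def)
  have colscar: "set (cols C) \<subseteq> carrier_vec (q*n)" using Ccar cols_dim[of C] by auto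
  have s1: "G ` {..<m} \<subseteq> V.span (set (cols C))"
  proof
    fix y assume "y \<in> G ` {..<m}"
    then obtain k where k: "k < m" "y = G k" by auto
    have "y \<in> V.span (PP ` ?I)"
    proof (rule V.span_sum_mem[where c = "\<lambda>x. beta k (fst x) (snd x)"])
      show "y \<in> carrier_vec (q*n)" using k vm_car by (simp add: G_def)
      fix r assume r: "r < q*n"
      have "y $ r = Lk k $$ (r mod n, r div n)" using k r by (simp add: G_def vm_def)
      also have "\<dots> = (\<Sum>x\<in>?I. beta k (fst x) (snd x) * blk LL n q (fst x) (snd x) $$ (r mod n, r div n))"
        using beta[OF k(1)] rdiv[OF r] by (simp add: lc case_prod_beta)
      also have "\<dots> = (\<Sum>x\<in>?I. beta k (fst x) (snd x) * PP x $ r)"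
        using r by (simp add: PP_def vm_def)
      finally show "y $ r = (\<Sum>x\<in>?I. beta k (fst x) (snd x) * PP x $ r)" .
    qed (use PPcar in auto)
    thus "y \<in> V.span (set (cols C))" using V.span_is_monotone[OF PPsub] by auto
  qed
  have s2: "set (cols C) \<subseteq> V.span (G ` {..<m})"
  proof
    fix y assume "y \<in> set (cols C)"
    then obtain t where t: "t < q*n" "y = col C t" using cols_eq by auto
    have tt: "t mod n < n" "t div n < q" using rdiv[OF t(1)] by auto
    show "y \<in> V.span (G ` {..<m})"
    proof (rule V.span_sum_mem[where c = "alpha (t mod n) (t div n)"])
      show "y \<in> carrier_vec (q*n)" using t colscar cols_eq by auto
      fix r assume r: "r < q*n"
      have "y $ r = blk LL n q (t mod n) (t div n) $$ (r mod n, r div n)"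
        using t colC r by (simp add: vm_def)
      also have "\<dots> = (\<Sum>l<m. alpha (t mod n) (t div n) l * Lk l $$ (r mod n, r div n))"
        using alpha[OF tt] rdiv[OF r] by (simp add: lc)
      also have "\<dots> = (\<Sum>l<m. alpha (t mod n) (t div n) l * G l $ r)"
        using r by (simp add: G_def vm_def)
      finally show "y $ r = (\<Sum>l<m. alpha (t mod n) (t div n) l * G l $ r)" .
    qed (use Gcar in auto)
  qed
  have sp: "V.span (G ` {..<m}) = V.span (set (cols C))"
  proof
    show "V.span (G ` {..<m}) \<subseteq> V.span (set (cols C))"
      by (rule V.span_is_subset[OF s1 V.span_is_submodule[OF colscar]])
    show "V.span (set (cols C)) \<subseteq> V.span (G ` {..<m})"
      by (rule V.span_is_subset[OF s2 V.span_is_submodule[OF Gcar]])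
  qed
  have rk: "V.rank C = card {..<m}" using m_rank by (simp add: C_def)
  show ?thesis
  proof (rule V.indep_from_rank[OF _ Gcar Ccar sp rk _ ])
    fix r assume r: "r < q*n"
    show "(\<Sum>k<m. d k * G k $ r) = 0" using d[of "r mod n" "r div n"] rdiv[OF r] r
      by (simp add: G_def vm_def)
  qed (use k in auto)
qed


lemma triple:
  fixes p :: "'i \<Rightarrow> 'a::comm_ring_1"
  shows "(\<Sum>b\<in>B. (\<Sum>a\<in>A. p a * (\<Sum>x\<in>C. s a x * t b x)) * u b)
       = (\<Sum>a\<in>A. p a * (\<Sum>x\<in>C. s a x * (\<Sum>b\<in>B. u b * t b x)))"
proof -
  have "(\<Sum>b\<in>B. (\<Sum>a\<in>A. p a * (\<Sum>x\<in>C. s a x * t b x)) * u b)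
      = (\<Sum>b\<in>B. \<Sum>a\<in>A. \<Sum>x\<in>C. p a * s a x * u b * t b x)"
    by (simp add: sum_distrib_left sum_distrib_right mult_ac)
  also have "\<dots> = (\<Sum>a\<in>A. \<Sum>b\<in>B. \<Sum>x\<in>C. p a * s a x * u b * t b x)" by (rule sum.swap)
  also have "\<dots> = (\<Sum>a\<in>A. \<Sum>x\<in>C. \<Sum>b\<in>B. p a * s a x * u b * t b x)"
    by (rule sum.cong[OF refl], rule sum.swap)
  also have "\<dots> = (\<Sum>a\<in>A. p a * (\<Sum>x\<in>C. s a x * (\<Sum>b\<in>B. u b * t b x)))"
    by (simp add: sum_distrib_left mult_ac)
  finally show ?thesis .
qed

theorem theorem1p2:
  fixes Lm :: "'a::conjugatable_field mat \<Rightarrow> 'a mat"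
    and n q m :: nat
    and LL :: "'a mat"
    and Lk Lk' :: "nat \<Rightarrow> 'a mat"
    and alpha alpha' :: "nat \<Rightarrow> nat \<Rightarrow> nat \<Rightarrow> 'a"
    and beta beta' :: "nat \<Rightarrow> nat \<Rightarrow> nat \<Rightarrow> 'a"
  assumes maps_to: "\<And>V. V \<in> carrier_mat q q \<Longrightarrow> Lm V \<in> carrier_mat n n"
    and additive: "\<And>V W. V \<in> carrier_mat q q \<Longrightarrow> W \<in> carrier_mat q q \<Longrightarrow> Lm (V + W) = Lm V + Lm W"
    and homogeneous: "\<And>c V. V \<in> carrier_mat q q \<Longrightarrow> Lm (c \<cdot>\<^sub>m V) = c \<cdot>\<^sub>m Lm V"
    and star_linear: "\<And>V. V \<in> carrier_mat q q \<Longrightarrow> Lm (mat_adjoint V) = mat_adjoint (Lm V)"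
    and LL_dim: "LL \<in> carrier_mat (n*n) (q*q)"
    and LL_matricization: "\<And>V. V \<in> carrier_mat q q \<Longrightarrow> LL *\<^sub>v vec_col V = vec_col (Lm V)"
    and m_rank: "m = vec_space.rank (q*n) (choi_matrix Lm n q)"
    and Lk_dim: "\<And>k. k < m \<Longrightarrow> Lk k \<in> carrier_mat n q"
    and Lk'_dim: "\<And>k. k < m \<Longrightarrow> Lk' k \<in> carrier_mat n q"
    and Lk_span: "mspan n q {..<m} Lk = mspan n q ({..<n} \<times> {..<q}) (\<lambda>(i,j). blk LL n q i j)"
    and Lk'_span: "mspan n q {..<m} Lk' = mspan n q ({..<n} \<times> {..<q}) (\<lambda>(i,j). blk LL n q i j)"
    and alpha: "\<And>i j. i < n \<Longrightarrow> j < q \<Longrightarrow> blk LL n q i j = lin_comb n q {..<m} (alpha i j) Lk"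
    and alpha': "\<And>i j. i < n \<Longrightarrow> j < q \<Longrightarrow> blk LL n q i j = lin_comb n q {..<m} (alpha' i j) Lk'"
    and beta: "\<And>k. k < m \<Longrightarrow> Lk k = lin_comb n q ({..<n} \<times> {..<q}) (\<lambda>(i,j). beta k i j) (\<lambda>(i,j). blk LL n q i j)"
    and beta': "\<And>k. k < m \<Longrightarrow> Lk' k = lin_comb n q ({..<n} \<times> {..<q}) (\<lambda>(i,j). beta' k i j) (\<lambda>(i,j). blk LL n q i j)"
  shows "let A = coefA n q alpha; A' = coefA n q alpha';
             B = coefB n q beta; B' = coefB n q beta';
             H = constrH m B Lk; H' = constrH m B' Lk';
             \<Phi> = mat m m (\<lambda>(k,l). ones_form (B k) (A' l))
         in \<Phi> \<in> carrier_mat m m \<and> invertible_mat \<Phi>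
            \<and> vstack n q m Lk = kron \<Phi> (1\<^sub>m n) * vstack n q m Lk'
            \<and> kron (mat_adjoint \<Phi>) (1\<^sub>m n) * vstack n q m A = vstack n q m A'
            \<and> H = \<Phi> * H' * mat_adjoint \<Phi>"
proof -
  let ?I = "{..<n} \<times> {..<q}"
  define P where "P x = blk LL n q (fst x) (snd x)" for x
  define bt where "bt k x = beta k (fst x) (snd x)" for k x
  define bt' where "bt' k x = beta' k (fst x) (snd x)" for k x
  define al where "al x l = alpha (fst x) (snd x) l" for x l
  define al' where "al' x l = alpha' (fst x) (snd x) l" for x l
  have lc: "\<And>K c F a b. a < n \<Longrightarrow> b < q \<Longrightarrow> lin_comb n q K c F $$ (a,b) = (\<Sum>k\<in>K. c k * F k $$ (a,b))"
    by (simp add: lin_comb_def)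
  have F1: "\<And>k a c. k < m \<Longrightarrow> a < n \<Longrightarrow> c < q \<Longrightarrow> Lk k $$ (a,c) = (\<Sum>x\<in>?I. bt k x * P x $$ (a,c))"
    using beta by (simp add: lc case_prod_beta bt_def P_def)
  have F1': "\<And>k a c. k < m \<Longrightarrow> a < n \<Longrightarrow> c < q \<Longrightarrow> Lk' k $$ (a,c) = (\<Sum>x\<in>?I. bt' k x * P x $$ (a,c))"
    using beta' by (simp add: lc case_prod_beta bt'_def P_def)
  have F2: "\<And>x a c. x \<in> ?I \<Longrightarrow> a < n \<Longrightarrow> c < q \<Longrightarrow> P x $$ (a,c) = (\<Sum>l<m. al x l * Lk l $$ (a,c))"
    using alpha by (auto simp: lc P_def al_def)
  have F2': "\<And>x a c. x \<in> ?I \<Longrightarrow> a < n \<Longrightarrow> c < q \<Longrightarrow> P x $$ (a,c) = (\<Sum>l<m. al' x l * Lk' l $$ (a,c))"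
    using alpha' by (auto simp: lc P_def al'_def)
  have IND: "\<And>d k. (\<And>a c. a < n \<Longrightarrow> c < q \<Longrightarrow> (\<Sum>k<m. d k * Lk k $$ (a,c)) = 0) \<Longrightarrow> k < m \<Longrightarrow> d k = 0"
    by (rule indep_blocks[OF maps_to LL_dim LL_matricization m_rank Lk_dim alpha beta])
  have IND': "\<And>d k. (\<And>a c. a < n \<Longrightarrow> c < q \<Longrightarrow> (\<Sum>k<m. d k * Lk' k $$ (a,c)) = 0) \<Longrightarrow> k < m \<Longrightarrow> d k = 0"
    by (rule indep_blocks[OF maps_to LL_dim LL_matricization m_rank Lk'_dim alpha' beta'])
  define ph where "ph k l = (\<Sum>x\<in>?I. bt k x * al' x l)" for k l
  define ps where "ps l k = (\<Sum>x\<in>?I. bt' l x * al x k)" for l k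
  have K1: "\<And>k a c. k < m \<Longrightarrow> a < n \<Longrightarrow> c < q \<Longrightarrow> Lk k $$ (a,c) = (\<Sum>l<m. ph k l * Lk' l $$ (a,c))"
  proof -
    fix k a c assume k: "k < m" and a: "a < n" and c: "c < q"
    have "Lk k $$ (a,c) = (\<Sum>x\<in>?I. bt k x * (\<Sum>l<m. al' x l * Lk' l $$ (a,c)))"
      using F1[OF k a c] F2'[OF _ a c] by simp
    also have "\<dots> = (\<Sum>l<m. ph k l * Lk' l $$ (a,c))"
      unfolding ph_def by (rule combine) auto
    finally show "Lk k $$ (a,c) = (\<Sum>l<m. ph k l * Lk' l $$ (a,c))" .
  qed
  have K1': "\<And>l a c. l < m \<Longrightarrow> a < n \<Longrightarrow> c < q \<Longrightarrow> Lk' l $$ (a,c) = (\<Sum>k<m. ps l k * Lk k $$ (a,c))"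
  proof -
    fix k a c assume k: "k < m" and a: "a < n" and c: "c < q"
    have "Lk' k $$ (a,c) = (\<Sum>x\<in>?I. bt' k x * (\<Sum>l<m. al x l * Lk l $$ (a,c)))"
      using F1'[OF k a c] F2[OF _ a c] by simp
    also have "\<dots> = (\<Sum>l<m. ps k l * Lk l $$ (a,c))"
      unfolding ps_def by (rule combine) auto
    finally show "Lk' k $$ (a,c) = (\<Sum>l<m. ps k l * Lk l $$ (a,c))" .
  qed
  define Phi where "Phi = mat m m (\<lambda>(k,l). ones_form (coefB n q beta k) (coefA n q alpha' l))"
  have Phi_eq: "Phi = mat m m (\<lambda>(k,l). ph k l)"
  proof (rule eq_matI)
    fix k l assume "k < dim_row (mat m m (\<lambda>(k,l). ph k l))" "l < dim_col (mat m m (\<lambda>(k,l). ph k l))"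
    hence k: "k < m" and l: "l < m" by auto
    have "ones_form (coefB n q beta k) (coefA n q alpha' l)
        = (\<Sum>(i,j)\<in>?I. coefB n q beta k $$ (i,j) * conjugate (coefA n q alpha' l $$ (i,j)))"
      by (rule ones_form_eq) (auto simp: coefA_def coefB_def)
    also have "\<dots> = ph k l" unfolding ph_def
      by (intro sum.cong refl) (auto simp: coefA_def coefB_def bt_def al'_def)
    finally show "Phi $$ (k,l) = mat m m (\<lambda>(k,l). ph k l) $$ (k,l)" using k l by (simp add: Phi_def)
  qed (auto simp: Phi_def)
  have Phi_car: "Phi \<in> carrier_mat m m" by (simp add: Phi_def)
  have inv1: "Phi * mat m m (\<lambda>(k,l). ps k l) = 1\<^sub>m m"
    unfolding Phi_eq by (rule prod_id[where X=Lk and Y=Lk' and ph=ph and ps=ps and m=m and n=n and q=q]) (fact K1 K1' IND)+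
  have inv2: "mat m m (\<lambda>(k,l). ps k l) * Phi = 1\<^sub>m m"
    unfolding Phi_eq by (rule prod_id[where X=Lk' and Y=Lk and ph=ps and ps=ph and m=m and n=n and q=q]) (fact K1 K1' IND')+
  have invertible: "invertible_mat Phi"
    unfolding invertible_mat_def inverts_mat_def using inv1 inv2 Phi_car
    by (auto simp: square_mat.simps intro!: exI[of _ "mat m m (\<lambda>(k,l). ps k l)"])
  have Phi_idx: "\<And>k l. k < m \<Longrightarrow> l < m \<Longrightarrow> Phi $$ (k,l) = ph k l" by (simp add: Phi_eq)
  have C2: "vstack n q m Lk = kron Phi (1\<^sub>m n) * vstack n q m Lk'"
  proof (rule eq_matI)
    fix r c assume "r < dim_row (kron Phi (1\<^sub>m n) * vstack n q m Lk')" "c < dim_col (kron Phi (1\<^sub>m n) * vstack n q m Lk')"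
    hence r: "r < m*n" and c: "c < q" using Phi_car by (auto simp: kron_def vstack_def)
    have n: "n > 0" using r by (cases n) auto
    have rd: "r div n < m" using r by (simp add: less_mult_imp_div_less)
    have rm: "r mod n < n" using n by simp
    have e1: "(kron Phi (1\<^sub>m n) * vstack n q m Lk') $$ (r,c) = (\<Sum>l<m. Phi $$ (r div n, l) * Lk' l $$ (r mod n, c))"
      by (rule kron_I_mult[OF Phi_car Lk'_dim r c])
    have e2: "vstack n q m Lk $$ (r,c) = Lk (r div n) $$ (r mod n, c)" using r c by (simp add: vstack_def)
    show "vstack n q m Lk $$ (r,c) = (kron Phi (1\<^sub>m n) * vstack n q m Lk') $$ (r,c)"
      unfolding e1 e2 K1[OF rd rm c] using rd by (simp add: Phi_idx)
  qed (use Phi_car in \<open>auto simp: kron_def vstack_def\<close>)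
  have adj_car: "mat_adjoint Phi \<in> carrier_mat m m" using Phi_car by auto
  have adj_idx: "\<And>k l. k < m \<Longrightarrow> l < m \<Longrightarrow> mat_adjoint Phi $$ (l,k) = conjugate (ph k l)"
    using Phi_car by (simp add: Phi_idx)
  have EQ3: "(\<Sum>k<m. al (a,c) k * ph k l) = al' (a,c) l" if a: "a < n" and c: "c < q" and l: "l < m" for a c l
  proof -
    define d where "d l' = (\<Sum>k<m. al (a,c) k * ph k l') - al' (a,c) l'" for l'
    have "d l = 0"
    proof (rule IND'[OF _ l])
      fix x y assume x: "x < n" and y: "y < q"
      have ac: "(a,c) \<in> ?I" using a c by simp
      have "(\<Sum>l'<m. d l' * Lk' l' $$ (x,y)) = (\<Sum>l'<m. (\<Sum>k<m. al (a,c) k * ph k l') * Lk' l' $$ (x,y))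
          - (\<Sum>l'<m. al' (a,c) l' * Lk' l' $$ (x,y))"
        unfolding d_def by (simp add: left_diff_distrib sum_subtractf)
      also have "(\<Sum>l'<m. (\<Sum>k<m. al (a,c) k * ph k l') * Lk' l' $$ (x,y))
          = (\<Sum>k<m. al (a,c) k * (\<Sum>l'<m. ph k l' * Lk' l' $$ (x,y)))"
        by (rule combine[symmetric]) auto
      also have "\<dots> = (\<Sum>k<m. al (a,c) k * Lk k $$ (x,y))" using K1 x y by simp
      also have "\<dots> = P (a,c) $$ (x,y)" using F2[OF ac x y] by simp
      also have "(\<Sum>l'<m. al' (a,c) l' * Lk' l' $$ (x,y)) = P (a,c) $$ (x,y)" using F2'[OF ac x y] by simp
      finally show "(\<Sum>l'<m. d l' * Lk' l' $$ (x,y)) = 0" by simp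
    qed
    thus ?thesis by (simp add: d_def)
  qed
  have C3: "kron (mat_adjoint Phi) (1\<^sub>m n) * vstack n q m (coefA n q alpha) = vstack n q m (coefA n q alpha')"
  proof (rule eq_matI)
    fix r c assume "r < dim_row (vstack n q m (coefA n q alpha'))" "c < dim_col (vstack n q m (coefA n q alpha'))"
    hence r: "r < m*n" and c: "c < q" by (auto simp: vstack_def)
    have n: "n > 0" using r by (cases n) auto
    have rd: "r div n < m" using r by (simp add: less_mult_imp_div_less)
    have rm: "r mod n < n" using n by simp
    have e1: "(kron (mat_adjoint Phi) (1\<^sub>m n) * vstack n q m (coefA n q alpha)) $$ (r,c)
        = (\<Sum>k<m. mat_adjoint Phi $$ (r div n, k) * coefA n q alpha k $$ (r mod n, c))"
      by (rule kron_I_mult[OF adj_car _ r c]) (simp add: coefA_def)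
    also have "\<dots> = (\<Sum>k<m. conjugate (al (r mod n, c) k * ph k (r div n)))"
      using rd rm c by (intro sum.cong refl) (auto simp: adj_idx coefA_def al_def conjugate_dist_mul mult.commute)
    also have "\<dots> = conjugate (\<Sum>k<m. al (r mod n, c) k * ph k (r div n))"
      by (simp add: sum_conjugate)
    also have "\<dots> = conjugate (al' (r mod n, c) (r div n))" using EQ3[OF rm c rd] by simp
    also have "\<dots> = vstack n q m (coefA n q alpha') $$ (r,c)"
      using r c rm by (simp add: vstack_def coefA_def al'_def)
    finally show "(kron (mat_adjoint Phi) (1\<^sub>m n) * vstack n q m (coefA n q alpha)) $$ (r,c) = vstack n q m (coefA n q alpha') $$ (r,c)" .
  qed (use adj_car in \<open>auto simp: kron_def vstack_def\<close>)
  have Star: "P x $$ (fst y, snd y) = conjugate (P y $$ (fst x, snd x))" if x: "x \<in> ?I" and y: "y \<in> ?I" for x y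
  proof -
    obtain c d where xd: "x = (c,d)" "c < n" "d < q" using x by auto
    obtain i j where yd: "y = (i,j)" "i < n" "j < q" using y by auto
    have E: "std_basis q d j \<in> carrier_mat q q" by (simp add: std_basis_def)
    have "P x $$ (fst y, snd y) = LL $$ (i + n*c, j + q*d)"
      using xd yd by (simp add: P_def blk_def ac_simps)
    also have "\<dots> = Lm (std_basis q j d) $$ (i,c)"
      by (rule LL_entry[OF LL_dim maps_to LL_matricization]) (use xd yd in auto)
    also have "\<dots> = mat_adjoint (Lm (std_basis q d j)) $$ (i,c)"
      using star_linear[OF E] adj_std_basis[OF xd(3) yd(3)] by metis
    also have "\<dots> = conjugate (Lm (std_basis q d j) $$ (c,i))"
      using maps_to[OF E] xd yd by simp
    also have "Lm (std_basis q d j) $$ (c,i) = LL $$ (c + n*i, d + q*j)"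
      by (rule LL_entry[OF LL_dim maps_to LL_matricization, symmetric]) (use xd yd in auto)
    also have "\<dots> = P y $$ (fst x, snd x)"
      using xd yd by (simp add: P_def blk_def ac_simps)
    finally show ?thesis .
  qed
  have fg: "(\<Sum>x\<in>?I. g x * conjugate (Lk l $$ (fst x, snd x)))
      = (\<Sum>y\<in>?I. (\<Sum>x\<in>?I. g x * P x $$ (fst y, snd y)) * conjugate (bt l y))" if l: "l < m" for g l
  proof -
    have "\<And>x. x \<in> ?I \<Longrightarrow> conjugate (Lk l $$ (fst x, snd x)) = (\<Sum>y\<in>?I. P x $$ (fst y, snd y) * conjugate (bt l y))"
    proof -
      fix x assume x: "x \<in> ?I"
      have "conjugate (Lk l $$ (fst x, snd x)) = conjugate (\<Sum>y\<in>?I. bt l y * P y $$ (fst x, snd x))"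
        using F1[OF l] x by auto
      also have "\<dots> = (\<Sum>y\<in>?I. conjugate (bt l y) * conjugate (P y $$ (fst x, snd x)))"
        by (simp add: sum_conjugate conjugate_dist_mul)
      also have "\<dots> = (\<Sum>y\<in>?I. P x $$ (fst y, snd y) * conjugate (bt l y))"
      proof (intro sum.cong refl)
        fix y assume y: "y \<in> ?I"
        have "conjugate (P y $$ (fst x, snd x)) = P x $$ (fst y, snd y)" using Star[OF x y] by simp
        thus "conjugate (bt l y) * conjugate (P y $$ (fst x, snd x)) = P x $$ (fst y, snd y) * conjugate (bt l y)"
          by (simp add: mult.commute)
      qed
      finally show "conjugate (Lk l $$ (fst x, snd x)) = (\<Sum>y\<in>?I. P x $$ (fst y, snd y) * conjugate (bt l y))" .
    qed
    hence "(\<Sum>x\<in>?I. g x * conjugate (Lk l $$ (fst x, snd x)))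
        = (\<Sum>x\<in>?I. g x * (\<Sum>y\<in>?I. P x $$ (fst y, snd y) * conjugate (bt l y)))" by simp
    also have "\<dots> = (\<Sum>y\<in>?I. (\<Sum>x\<in>?I. g x * P x $$ (fst y, snd y)) * conjugate (bt l y))"
      by (rule combine) auto
    finally show ?thesis .
  qed
  have Hidx: "constrH m (coefB n q beta) Lk $$ (k,l) = (\<Sum>x\<in>?I. bt k x * conjugate (Lk l $$ (fst x, snd x)))"
    if k: "k < m" and l: "l < m" for k l
  proof -
    have "constrH m (coefB n q beta) Lk $$ (k,l) = ones_form (coefB n q beta k) (Lk l)"
      using k l by (simp add: constrH_def)
    also have "\<dots> = (\<Sum>(i,j)\<in>?I. coefB n q beta k $$ (i,j) * conjugate (Lk l $$ (i,j)))"
      by (rule ones_form_eq) (auto simp: coefB_def Lk_dim[OF l])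
    also have "\<dots> = (\<Sum>x\<in>?I. bt k x * conjugate (Lk l $$ (fst x, snd x)))"
      by (intro sum.cong refl) (auto simp: coefB_def bt_def)
    finally show ?thesis .
  qed
  have H'idx: "constrH m (coefB n q beta') Lk' $$ (k,l) = (\<Sum>x\<in>?I. bt' k x * conjugate (Lk' l $$ (fst x, snd x)))"
    if k: "k < m" and l: "l < m" for k l
  proof -
    have "constrH m (coefB n q beta') Lk' $$ (k,l) = ones_form (coefB n q beta' k) (Lk' l)"
      using k l by (simp add: constrH_def)
    also have "\<dots> = (\<Sum>(i,j)\<in>?I. coefB n q beta' k $$ (i,j) * conjugate (Lk' l $$ (i,j)))"
      by (rule ones_form_eq) (auto simp: coefB_def Lk'_dim[OF l])
    also have "\<dots> = (\<Sum>x\<in>?I. bt' k x * conjugate (Lk' l $$ (fst x, snd x)))"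
      by (intro sum.cong refl) (auto simp: coefB_def bt'_def)
    finally show ?thesis .
  qed
  define H where "H = constrH m (coefB n q beta) Lk"
  define H' where "H' = constrH m (coefB n q beta') Lk'"
  have H'car: "H' \<in> carrier_mat m m" by (simp add: H'_def constrH_def)
  have C4: "H = Phi * H' * mat_adjoint Phi"
  proof (rule eq_matI)
    fix k l assume "k < dim_row (Phi * H' * mat_adjoint Phi)" "l < dim_col (Phi * H' * mat_adjoint Phi)"
    hence k: "k < m" and l: "l < m" using Phi_car by auto
    have r2: "\<And>b. b < m \<Longrightarrow> (Phi * H') $$ (k,b) = (\<Sum>a<m. ph k a * (\<Sum>x\<in>?I. bt' a x * conjugate (Lk' b $$ (fst x, snd x))))"
      using k Phi_car H'car by (simp add: scalar_prod_def atLeast0LessThan Phi_idx H'idx H'_def)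
    have "(Phi * H' * mat_adjoint Phi) $$ (k,l) = (\<Sum>b<m. (Phi * H') $$ (k,b) * mat_adjoint Phi $$ (b,l))"
      using k l Phi_car H'car by (simp add: scalar_prod_def atLeast0LessThan)
    also have "\<dots> = (\<Sum>b<m. (\<Sum>a<m. ph k a * (\<Sum>x\<in>?I. bt' a x * conjugate (Lk' b $$ (fst x, snd x)))) * conjugate (ph l b))"
      using l by (intro sum.cong refl) (simp add: r2 adj_idx)
    also have "\<dots> = (\<Sum>a<m. ph k a * (\<Sum>x\<in>?I. bt' a x * (\<Sum>b<m. conjugate (ph l b) * conjugate (Lk' b $$ (fst x, snd x)))))"
      by (rule triple)
    also have "\<dots> = (\<Sum>a<m. ph k a * (\<Sum>x\<in>?I. bt' a x * conjugate (Lk l $$ (fst x, snd x))))"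
    proof -
      have "\<And>x. x \<in> ?I \<Longrightarrow> (\<Sum>b<m. conjugate (ph l b) * conjugate (Lk' b $$ (fst x, snd x))) = conjugate (Lk l $$ (fst x, snd x))"
        using K1[OF l] by (auto simp: sum_conjugate conjugate_dist_mul)
      thus ?thesis by simp
    qed
    also have "\<dots> = (\<Sum>x\<in>?I. (\<Sum>a<m. ph k a * bt' a x) * conjugate (Lk l $$ (fst x, snd x)))"
      by (rule combine) auto
    also have "\<dots> = (\<Sum>y\<in>?I. (\<Sum>x\<in>?I. (\<Sum>a<m. ph k a * bt' a x) * P x $$ (fst y, snd y)) * conjugate (bt l y))"
      by (rule fg[OF l])
    also have "\<dots> = (\<Sum>y\<in>?I. Lk k $$ (fst y, snd y) * conjugate (bt l y))"
    proof (intro sum.cong refl)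
      fix y assume y: "y \<in> ?I"
      have "(\<Sum>x\<in>?I. (\<Sum>a<m. ph k a * bt' a x) * P x $$ (fst y, snd y))
          = (\<Sum>a<m. ph k a * (\<Sum>x\<in>?I. bt' a x * P x $$ (fst y, snd y)))"
        by (rule combine[symmetric]) auto
      also have "\<dots> = (\<Sum>a<m. ph k a * Lk' a $$ (fst y, snd y))"
        using F1' y by auto
      also have "\<dots> = Lk k $$ (fst y, snd y)" using K1[OF k] y by auto
      finally show "(\<Sum>x\<in>?I. (\<Sum>a<m. ph k a * bt' a x) * P x $$ (fst y, snd y)) * conjugate (bt l y)
          = Lk k $$ (fst y, snd y) * conjugate (bt l y)" by simp
    qed
    also have "\<dots> = (\<Sum>y\<in>?I. (\<Sum>x\<in>?I. bt k x * P x $$ (fst y, snd y)) * conjugate (bt l y))"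
      using F1[OF k] by (intro sum.cong refl) auto
    also have "\<dots> = H $$ (k,l)"
      unfolding H_def Hidx[OF k l] by (rule fg[OF l, symmetric])
    finally show "H $$ (k,l) = (Phi * H' * mat_adjoint Phi) $$ (k,l)" by simp
  qed (use Phi_car in \<open>auto simp: H_def constrH_def\<close>)
  show ?thesis
    unfolding Let_def Phi_def[symmetric] H_def[symmetric] H'_def[symmetric]
    using Phi_car invertible C2 C3 C4 by auto
qed

end
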